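(* Let $k\geq 2$ be an integer and let $G=(V,E)$ be a graph. Let $X_1,X_2\subseteq V$. Let $\sim$ be a symmetric binary relation on $V^2$ such that (a) for every $(u,v)\in V^2$ and $w\in X_1$, $w$ has at most $\Delta_1$ neighbours $z\in X_2$, and at most $s_1$ of them satisfy $(u,v)\sim(z,w)$; (b) for every $(u,v)\in V^2$ and $w\in X_2$, $w$ has at most $\Delta_2$ neighbours $z\in X_1$, and at most $s_2$ of them satisfy $(u,v)\sim(z,w)$. Let $M=\max(\Delta_1s_2,\Delta_2s_1)$. Then the number of homomorphic $2k$-cycles $(x_1,\dots,x_{2k})\in(X_1\times X_2\times X_1\times\dots\times X_2)\cup(X_2\times X_1\times X_2\times\dots\times X_1)$ in $G$ such that $(x_i,x_{i+1})\sim(x_j,x_{j+1})$ for some $i\neq j$ is at most $$32k\left(kM\hom(C_{2k-2},G)\hom(C_{2k},G)\right)^{1/2}.$$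
   Context: A homomorphic $2k$-cycle in $G$ is a tuple $(x_1,\dots,x_{2k})\in V^{2k}$ with $x_ix_{i+1}\in E$ for all $i$, indices modulo $2k$ (so $x_{2k+1}=x_1$). $\hom(H,G)$ is the number of homomorphisms from $H$ to $G$. Convention: $C_2$ is a single edge, so $\hom(C_2,G)=2|E|$. *)

theory Defs
  imports Complex_Main "HOL-Library.FuncSet"
begin

definition simple_graph :: "'a set \<Rightarrow> ('a \<Rightarrow> 'a \<Rightarrow> bool) \<Rightarrow> bool" where
  "simple_graph V E \<longleftrightarrow> finite V \<and> (\<forall>u v. E u v \<longrightarrow> u \<in> V \<and> v \<in> V)
     \<and> (\<forall>u v. E u v \<longrightarrow> E v u) \<and> (\<forall>u. \<not> E u u)"

text \<open>Homomorphic m-cycles: tuples (x_0,...,x_{m-1}) in V^m with x_i x_{i+1} an edge,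
  indices mod m. For m = 2 this gives 2|E| (the convention C_2 = single edge).\<close>
definition hom_cycles :: "'a set \<Rightarrow> ('a \<Rightarrow> 'a \<Rightarrow> bool) \<Rightarrow> nat \<Rightarrow> (nat \<Rightarrow> 'a) set" where
  "hom_cycles V E m = {x \<in> {0..<m} \<rightarrow>\<^sub>E V. \<forall>i<m. E (x i) (x (Suc i mod m))}"

definition hom_cycle :: "'a set \<Rightarrow> ('a \<Rightarrow> 'a \<Rightarrow> bool) \<Rightarrow> nat \<Rightarrow> nat" where
  "hom_cycle V E m = card (hom_cycles V E m)"

end

theory Submission
  imports Defs "HOL-Analysis.Convex"
begin

definition walks :: "'a set \<Rightarrow> ('a \<Rightarrow> 'a \<Rightarrow> bool) \<Rightarrow> nat \<Rightarrow> (nat \<Rightarrow> 'a) set" where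
  "walks V E n = {p \<in> {0..n} \<rightarrow>\<^sub>E V. \<forall>i<n. E (p i) (p (Suc i))}"

definition wk :: "'a set \<Rightarrow> ('a \<Rightarrow> 'a \<Rightarrow> bool) \<Rightarrow> nat \<Rightarrow> 'a \<Rightarrow> 'a \<Rightarrow> (nat \<Rightarrow> 'a) set" where
  "wk V E n a b = {p \<in> walks V E n. p 0 = a \<and> p n = b}"

lemma finite_walks: "finite V \<Longrightarrow> finite (walks V E n)"
  unfolding walks_def by (rule finite_subset[OF _ finite_PiE[of "{0..n}" "\<lambda>_. V"]]) auto

lemma finite_wk: "finite V \<Longrightarrow> finite (wk V E n a b)"
  unfolding wk_def using finite_walks[of V E n] by auto

lemma sg_sym: "simple_graph V E \<Longrightarrow> E u v \<Longrightarrow> E v u"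
  unfolding simple_graph_def by blast

lemma sg_V: "simple_graph V E \<Longrightarrow> E u v \<Longrightarrow> u \<in> V \<and> v \<in> V"
  unfolding simple_graph_def by blast

lemma sg_fin: "simple_graph V E \<Longrightarrow> finite V"
  unfolding simple_graph_def by blast

definition glue :: "nat \<Rightarrow> (nat \<Rightarrow> 'a) \<Rightarrow> (nat \<Rightarrow> 'a) \<Rightarrow> nat \<Rightarrow> 'a" where
  "glue n p q = (\<lambda>i. if i \<le> n then p i else if i < 2*n then q (2*n - i) else undefined)"

lemma pairs_le_cycles:
  assumes G: "simple_graph V E" and n: "n \<ge> 1"
  shows "card {(p, q). p \<in> walks V E n \<and> q \<in> walks V E n \<and> p 0 = q 0 \<and> p n = q n}
         \<le> hom_cycle V E (2*n)"
proof -
  let ?P = "{(p, q). p \<in> walks V E n \<and> q \<in> walks V E n \<and> p 0 = q 0 \<and> p n = q n}"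
  have fin: "finite (hom_cycles V E (2*n))"
    unfolding hom_cycles_def
    by (rule finite_subset[OF _ finite_PiE[of "{0..<2*n}" "\<lambda>_. V"]]) (auto simp: sg_fin[OF G])
  have gi: "glue n p q i = q (2*n - i)" if "n \<le> i" "i < 2*n" "p n = q n" for p q :: "nat \<Rightarrow> 'a" and i
    using that by (auto simp: glue_def)
  have "(\<lambda>(p,q). glue n p q) ` ?P \<subseteq> hom_cycles V E (2*n)"
  proof safe
    fix p q assume p: "p \<in> walks V E n" and q: "q \<in> walks V E n" and e0: "p 0 = q 0" and en: "p n = q n"
    have pV: "i \<le> n \<Longrightarrow> p i \<in> V" for i using p unfolding walks_def by auto
    have qV: "i \<le> n \<Longrightarrow> q i \<in> V" for i using q unfolding walks_def by auto
    have pE: "i < n \<Longrightarrow> E (p i) (p (Suc i))" for i using p unfolding walks_def by auto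
    have qE: "i < n \<Longrightarrow> E (q (Suc i)) (q i)" for i using q sg_sym[OF G] unfolding walks_def by auto
    show "glue n p q \<in> hom_cycles V E (2*n)"
      unfolding hom_cycles_def mem_Collect_eq
    proof (intro conjI allI impI)
      show "glue n p q \<in> {0..<2 * n} \<rightarrow>\<^sub>E V"
        using pV qV n by (auto simp: glue_def PiE_def extensional_def)
      fix i assume i: "i < 2*n"
      show "E (glue n p q i) (glue n p q (Suc i mod (2 * n)))"
      proof (cases "i < n")
        case True
        then have "Suc i mod (2*n) = Suc i" using n by auto
        then show ?thesis using True pE by (simp add: glue_def)
      next
        case False
        show ?thesis
        proof (cases "Suc i < 2*n")
          case True
          then have "Suc i mod (2*n) = Suc i" by auto
          moreover have "E (q (Suc (2*n - Suc i))) (q (2*n - Suc i))" using qE False True by auto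
          moreover have "Suc (2*n - Suc i) = 2*n - i" using i by auto
          ultimately show ?thesis using gi[of i p q] gi[of "Suc i" p q] False True en i by auto
        next
          case F2: False
          then have "i = 2*n - 1" using i by auto
          then have "Suc i mod (2*n) = 0" using i by auto
          moreover have "E (q (Suc 0)) (q 0)" using qE n by auto
          ultimately show ?thesis using gi[of i p q] False i en e0 \<open>i = 2*n-1\<close>
            by (simp add: glue_def)
        qed
      qed
    qed
  qed
  moreover have "inj_on (\<lambda>(p,q). glue n p q) ?P"
  proof (rule inj_onI, clarify)
    fix p q p' q'
    assume p: "p \<in> walks V E n" and q: "q \<in> walks V E n" and e0: "p 0 = q 0" and en: "p n = q n"
      and p': "p' \<in> walks V E n" and q': "q' \<in> walks V E n" and e0': "p' 0 = q' 0" and en': "p' n = q' n"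
      and eq: "glue n p q = glue n p' q'"
    have ext: "f \<in> walks V E n \<Longrightarrow> i > n \<Longrightarrow> f i = undefined" for f :: "nat \<Rightarrow> 'a" and i
      unfolding walks_def by (auto simp: PiE_def extensional_def)
    have "p i = p' i" for i
    proof (cases "i \<le> n")
      case True then show ?thesis using fun_cong[OF eq, of i] by (simp add: glue_def)
    next
      case False then show ?thesis using ext[OF p, of i] ext[OF p', of i] by simp
    qed
    moreover have "q i = q' i" for i
    proof -
      consider "i = 0" | "i = n" | "0 < i \<and> i < n" | "i > n" by linarith
      then show ?thesis
      proof cases
        case 1 then show ?thesis using e0 e0' \<open>\<And>i. p i = p' i\<close> by metis
      next
        case 2 then show ?thesis using en en' \<open>\<And>i. p i = p' i\<close> by metis
      next
        case 3
        then have "q i = glue n p q (2*n - i)" using gi[of "2*n-i" p q] en by auto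
        moreover have "q' i = glue n p' q' (2*n - i)" using gi[of "2*n-i" p' q'] en' 3 by auto
        ultimately show ?thesis using eq by simp
      next
        case 4 then show ?thesis using ext[OF q, of i] ext[OF q', of i] by simp
      qed
    qed
    ultimately show "p = p' \<and> q = q'" by auto
  qed
  ultimately have "card ?P \<le> card (hom_cycles V E (2*n))"
    using card_inj_on_le[OF _ _ fin] by blast
  then show ?thesis unfolding hom_cycle_def .
qed


lemma walks_end_V: "p \<in> walks V E n \<Longrightarrow> i \<le> n \<Longrightarrow> p i \<in> V"
  unfolding walks_def by auto

lemma sq_sum_le:
  assumes G: "simple_graph V E" and n: "n \<ge> 1"
  shows "(\<Sum>(a,b)\<in>V\<times>V. real (card (wk V E n a b))^2) \<le> real (hom_cycle V E (2*n))"
proof -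
  have fV: "finite V" using sg_fin[OF G] .
  let ?P = "{(p, q). p \<in> walks V E n \<and> q \<in> walks V E n \<and> p 0 = q 0 \<and> p n = q n}"
  have "(\<Sum>(a,b)\<in>V\<times>V. real (card (wk V E n a b))^2)
        = real (\<Sum>ab\<in>V\<times>V. card (wk V E n (fst ab) (snd ab) \<times> wk V E n (fst ab) (snd ab)))"
    by (simp add: case_prod_beta power2_eq_square card_cartesian_product)
  also have "(\<Sum>ab\<in>V\<times>V. card (wk V E n (fst ab) (snd ab) \<times> wk V E n (fst ab) (snd ab)))
      = card (\<Union>ab\<in>V\<times>V. wk V E n (fst ab) (snd ab) \<times> wk V E n (fst ab) (snd ab))"
    by (rule card_UN_disjoint[symmetric]) (use finite_wk[OF fV] in \<open>auto simp: fV wk_def\<close>)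
  also have "\<dots> \<le> card ?P"
  proof (rule card_mono)
    show "finite ?P"
      by (rule finite_subset[of _ "walks V E n \<times> walks V E n"]) (auto simp: finite_walks fV)
    show "(\<Union>ab\<in>V\<times>V. wk V E n (fst ab) (snd ab) \<times> wk V E n (fst ab) (snd ab)) \<subseteq> ?P"
      by (auto simp: wk_def)
  qed
  also have "\<dots> \<le> hom_cycle V E (2*n)" by (rule pairs_le_cycles[OF G n])
  finally show ?thesis by simp
qed

lemma regroup:
  assumes fV: "finite V" and Y: "Y \<subseteq> V"
  shows "(\<Sum>p\<in>{p \<in> walks V E n. p 0 \<in> Y}. h (p 0) (p n))
       = (\<Sum>(a,b)\<in>Y\<times>V. real (card (wk V E n a b)) * h a b)"
proof -
  let ?S = "{p \<in> walks V E n. p 0 \<in> Y}"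
  have fS: "finite ?S" using finite_walks[OF fV] by auto
  have "(\<Sum>p\<in>?S. h (p 0) (p n)) = (\<Sum>ab\<in>Y\<times>V. \<Sum>p\<in>{p. p \<in> ?S \<and> (p 0, p n) = ab}. h (p 0) (p n))"
    by (rule sum.group[symmetric]) (use finite_subset[OF Y fV] in \<open>auto simp: fS fV Y walks_end_V\<close>)
  also have "\<dots> = (\<Sum>ab\<in>Y\<times>V. real (card (wk V E n (fst ab) (snd ab))) * h (fst ab) (snd ab))"
  proof (rule sum.cong[OF refl])
    fix ab assume ab: "ab \<in> Y \<times> V"
    have "{p. p \<in> ?S \<and> (p 0, p n) = ab} = wk V E n (fst ab) (snd ab)"
      using ab by (auto simp: wk_def)
    moreover have "(\<Sum>p\<in>wk V E n (fst ab) (snd ab). h (p 0) (p n))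
        = (\<Sum>p\<in>wk V E n (fst ab) (snd ab). h (fst ab) (snd ab))"
      by (rule sum.cong) (auto simp: wk_def)
    ultimately show "(\<Sum>p\<in>{p. p \<in> ?S \<and> (p 0, p n) = ab}. h (p 0) (p n))
        = real (card (wk V E n (fst ab) (snd ab))) * h (fst ab) (snd ab)"
      by simp
  qed
  finally show ?thesis by (simp add: case_prod_beta)
qed


definition Sp :: "('a \<Rightarrow> 'a \<Rightarrow> bool) \<Rightarrow> 'a set \<Rightarrow> ('a \<times> 'a \<Rightarrow> 'a \<times> 'a \<Rightarrow> bool) \<Rightarrow> nat \<Rightarrow> (nat \<Rightarrow> 'a) \<Rightarrow> 'a set" where
  "Sp E Z sim n p = {z \<in> Z. E (p 0) z \<and> (\<exists>i<n. sim (p i, p (Suc i)) (z, p 0))}"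

definition Qs where
  "Qs V E Z sim n p = {q \<in> walks V E (n-1). q 0 = p n \<and> q (n-1) \<in> Sp E Z sim n p}"

lemma C1:
  assumes G: "simple_graph V E" and n: "n \<ge> 2"
  shows "card {x \<in> hom_cycles V E (2*n). x 0 \<in> Y \<and> x (2*n-1) \<in> Z \<and>
                 (\<exists>i<n. sim (x i, x (Suc i)) (x (2*n-1), x 0))}
         \<le> card (SIGMA p:{p \<in> walks V E n. p 0 \<in> Y}. Qs V E Z sim n p)"
proof -
  have fV: "finite V" using sg_fin[OF G] .
  let ?C = "{x \<in> hom_cycles V E (2*n). x 0 \<in> Y \<and> x (2*n-1) \<in> Z \<and>
                 (\<exists>i<n. sim (x i, x (Suc i)) (x (2*n-1), x 0))}"
  let ?f = "\<lambda>x. (restrict x {0..n}, restrict (\<lambda>i. x (n+i)) {0..n-1})"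
  have fin: "finite (SIGMA p:{p \<in> walks V E n. p 0 \<in> Y}. Qs V E Z sim n p)"
    by (rule finite_SigmaI) (use finite_walks[OF fV] in \<open>auto simp: Qs_def\<close>)
  have "?f ` ?C \<subseteq> (SIGMA p:{p \<in> walks V E n. p 0 \<in> Y}. Qs V E Z sim n p)"
  proof (rule image_subsetI)
    fix x assume "x \<in> ?C"
    then obtain i where x: "x \<in> hom_cycles V E (2*n)" and x0: "x 0 \<in> Y" and xz: "x (2*n-1) \<in> Z"
      and i: "i < n" and si: "sim (x i, x (Suc i)) (x (2*n-1), x 0)" by blast
    have xV: "j < 2*n \<Longrightarrow> x j \<in> V" for j using x unfolding hom_cycles_def by auto
    have xE: "j < 2*n \<Longrightarrow> E (x j) (x (Suc j mod (2*n)))" for j using x unfolding hom_cycles_def by auto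
    have xE': "Suc j < 2*n \<Longrightarrow> E (x j) (x (Suc j))" for j using xE[of j] by simp
    have last: "E (x 0) (x (2*n-1))"
    proof -
      have "Suc (2*n-1) mod (2*n) = 0" using n by simp
      then show ?thesis using xE[of "2*n-1"] n sg_sym[OF G] by auto
    qed
    have p: "restrict x {0..n} \<in> walks V E n"
      unfolding walks_def using xV xE' n by auto
    have q: "restrict (\<lambda>i. x (n+i)) {0..n-1} \<in> walks V E (n-1)"
      unfolding walks_def using xV xE' n by auto
    have "Suc (n - 1) = n" using n by simp
    show "?f x \<in> (SIGMA p:{p \<in> walks V E n. p 0 \<in> Y}. Qs V E Z sim n p)"
      using p q x0 n xz last i si
      unfolding Qs_def Sp_def by (auto intro!: exI[of _ i] simp: mult_2)
  qed
  moreover have "inj_on ?f ?C"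
  proof (rule inj_onI)
    fix x y assume x: "x \<in> ?C" and y: "y \<in> ?C" and eq: "?f x = ?f y"
    have ext: "z \<in> ?C \<Longrightarrow> j \<ge> 2*n \<Longrightarrow> z j = undefined" for z j
      unfolding hom_cycles_def by (auto simp: PiE_def extensional_def)
    show "x = y"
    proof
      fix j
      consider "j \<le> n" | "n < j \<and> j < 2*n" | "j \<ge> 2*n" by linarith
      then show "x j = y j"
      proof cases
        case 1 then show ?thesis using fun_cong[OF arg_cong[OF eq, of fst], of j] by simp
      next
        case 2
        then have "j - n \<in> {0..n-1}" by auto
        then show ?thesis using 2 fun_cong[OF arg_cong[OF eq, of snd], of "j - n"] by simp
      next
        case 3 then show ?thesis using ext[OF x] ext[OF y] by simp
      qed
    qed
  qed
  ultimately show ?thesis using card_inj_on_le[OF _ _ fin] by blast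
qed


lemma C2:
  assumes fV: "finite V" and Z: "Z \<subseteq> V"
  shows "card (Qs V E Z sim n p) = (\<Sum>z\<in>Sp E Z sim n p. card (wk V E (n-1) (p n) z))"
proof -
  have "Qs V E Z sim n p = (\<Union>z\<in>Sp E Z sim n p. wk V E (n-1) (p n) z)"
    unfolding Qs_def wk_def by auto
  moreover have "finite (Sp E Z sim n p)"
    using finite_subset[OF Z fV] unfolding Sp_def by auto
  ultimately show ?thesis
    by (simp, subst card_UN_disjoint) (use finite_wk[OF fV] in \<open>auto simp: wk_def\<close>)
qed

lemma C3:
  assumes fV: "finite V" and Z: "Z \<subseteq> V" and p: "p \<in> walks V E n" and p0: "p 0 \<in> Y"
    and hs: "\<forall>u \<in> V. \<forall>v \<in> V. \<forall>w \<in> Y. card {z \<in> Z. E w z \<and> sim (u, v) (z, w)} \<le> s"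
  shows "card (Sp E Z sim n p) \<le> n * s"
proof -
  have fZ: "finite Z" using finite_subset[OF Z fV] .
  have "card (Sp E Z sim n p) \<le> card (\<Union>i<n. {z \<in> Z. E (p 0) z \<and> sim (p i, p (Suc i)) (z, p 0)})"
    by (rule card_mono) (use fZ in \<open>auto simp: Sp_def\<close>)
  also have "\<dots> \<le> (\<Sum>i<n. card {z \<in> Z. E (p 0) z \<and> sim (p i, p (Suc i)) (z, p 0)})"
    by (rule card_UN_le) simp
  also have "\<dots> \<le> (\<Sum>i<n. s)"
  proof (rule sum_mono)
    fix i assume "i \<in> {..<n}"
    then have "p i \<in> V" "p (Suc i) \<in> V" using walks_end_V[OF p] by auto
    then show "card {z \<in> Z. E (p 0) z \<and> sim (p i, p (Suc i)) (z, p 0)} \<le> s" using hs p0 by blast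
  qed
  finally show ?thesis by simp
qed

lemma C4:
  assumes fV: "finite V" and Z: "Z \<subseteq> V" and p: "p \<in> walks V E n" and p0: "p 0 \<in> Y"
    and hs: "\<forall>u \<in> V. \<forall>v \<in> V. \<forall>w \<in> Y. card {z \<in> Z. E w z \<and> sim (u, v) (z, w)} \<le> s"
  shows "real (card (Qs V E Z sim n p)) \<le>
      sqrt (real n * real s * (\<Sum>z\<in>{z \<in> Z. E (p 0) z}. real (card (wk V E (n-1) (p n) z))^2))"
proof (rule real_le_rsqrt)
  let ?S = "Sp E Z sim n p"
  let ?w = "\<lambda>z. real (card (wk V E (n-1) (p n) z))"
  have fZ: "finite Z" using finite_subset[OF Z fV] .
  have "real (card (Qs V E Z sim n p)) = (\<Sum>z\<in>?S. ?w z)"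
    using C2[OF fV Z] by simp
  then have "(real (card (Qs V E Z sim n p)))^2 \<le> (\<Sum>z\<in>?S. (?w z)^2) * card ?S"
    using sum_squared_le_sum_of_squares[of ?w ?S] by simp
  also have "\<dots> \<le> (\<Sum>z\<in>{z \<in> Z. E (p 0) z}. (?w z)^2) * (real n * real s)"
  proof (rule mult_mono)
    show "(\<Sum>z\<in>?S. (?w z)^2) \<le> (\<Sum>z\<in>{z \<in> Z. E (p 0) z}. (?w z)^2)"
      by (rule sum_mono2) (use fZ in \<open>auto simp: Sp_def\<close>)
    show "real (card ?S) \<le> real n * real s"
      using C3[OF fV Z p p0 hs] by (metis of_nat_le_iff of_nat_mult)
  qed (auto intro: sum_nonneg)
  finally show "(real (card (Qs V E Z sim n p)))^2 \<le>
      real n * real s * (\<Sum>z\<in>{z \<in> Z. E (p 0) z}. (?w z)^2)" by (simp add: mult_ac)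
qed

lemma C5:
  assumes G: "simple_graph V E" and n: "m \<ge> 1" and Y: "Y \<subseteq> V" and Z: "Z \<subseteq> V"
    and hd: "\<forall>z \<in> Z. card {w \<in> Y. E z w} \<le> \<Delta>"
  shows "(\<Sum>(a,b)\<in>Y\<times>V. real n1 * real s * (\<Sum>z\<in>{z \<in> Z. E a z}. real (card (wk V E m b z))^2))
     \<le> real n1 * real s * real \<Delta> * real (hom_cycle V E (2*m))"
proof -
  have fV: "finite V" using sg_fin[OF G] .
  have fZ: "finite Z" using finite_subset[OF Z fV] .
  have fY: "finite Y" using finite_subset[OF Y fV] .
  let ?w = "\<lambda>b z. real (card (wk V E m b z))^2"
  have "(\<Sum>(a,b)\<in>Y\<times>V. (\<Sum>z\<in>{z \<in> Z. E a z}. ?w b z))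
      = (\<Sum>a\<in>Y. \<Sum>b\<in>V. \<Sum>z\<in>Z. if E a z then ?w b z else 0)"
    by (simp add: sum.cartesian_product[symmetric] sum.inter_filter fZ)
  also have "\<dots> = (\<Sum>b\<in>V. \<Sum>z\<in>Z. \<Sum>a\<in>Y. if E a z then ?w b z else 0)"
    by (subst sum.swap) (simp add: sum.swap[of _ Y Z])
  also have "\<dots> = (\<Sum>b\<in>V. \<Sum>z\<in>Z. real (card {a \<in> Y. E z a}) * ?w b z)"
  proof (intro sum.cong refl)
    fix b z assume "z \<in> Z"
    have "{a \<in> Y. E z a} = {a \<in> Y. E a z}" using sg_sym[OF G] by blast
    then show "(\<Sum>a\<in>Y. if E a z then ?w b z else 0) = real (card {a \<in> Y. E z a}) * ?w b z"
      by (simp add: sum.inter_filter[symmetric] fY)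
  qed
  also have "\<dots> \<le> (\<Sum>b\<in>V. \<Sum>z\<in>V. real \<Delta> * ?w b z)"
  proof (rule sum_mono)
    fix b assume "b \<in> V"
    have "(\<Sum>z\<in>Z. real (card {a \<in> Y. E z a}) * ?w b z) \<le> (\<Sum>z\<in>Z. real \<Delta> * ?w b z)"
      by (rule sum_mono, rule mult_right_mono) (use hd in auto)
    also have "\<dots> \<le> (\<Sum>z\<in>V. real \<Delta> * ?w b z)"
      by (rule sum_mono2) (auto simp: fV Z)
    finally show "(\<Sum>z\<in>Z. real (card {a \<in> Y. E z a}) * ?w b z) \<le> (\<Sum>z\<in>V. real \<Delta> * ?w b z)" .
  qed
  also have "\<dots> = real \<Delta> * (\<Sum>(b,z)\<in>V\<times>V. ?w b z)"
    by (simp add: sum.cartesian_product[symmetric] sum_distrib_left)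
  also have "\<dots> \<le> real \<Delta> * real (hom_cycle V E (2*m))"
    by (rule mult_left_mono) (use sq_sum_le[OF G, of "m"] n in auto)
  finally have *: "(\<Sum>(a,b)\<in>Y\<times>V. (\<Sum>z\<in>{z \<in> Z. E a z}. ?w b z))
      \<le> real \<Delta> * real (hom_cycle V E (2*m))" .
  have "(\<Sum>(a,b)\<in>Y\<times>V. real n1 * real s * (\<Sum>z\<in>{z \<in> Z. E a z}. ?w b z))
      = real n1 * real s * (\<Sum>(a,b)\<in>Y\<times>V. (\<Sum>z\<in>{z \<in> Z. E a z}. ?w b z))"
    by (simp add: sum_distrib_left case_prod_beta)
  also have "\<dots> \<le> real n1 * real s * (real \<Delta> * real (hom_cycle V E (2*m)))"
    by (rule mult_left_mono[OF *]) simp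
  finally show ?thesis by (simp add: mult_ac)
qed


lemma core:
  assumes G: "simple_graph V E" and n: "n \<ge> 2" and Y: "Y \<subseteq> V" and Z: "Z \<subseteq> V"
    and hs: "\<forall>u \<in> V. \<forall>v \<in> V. \<forall>w \<in> Y. card {z \<in> Z. E w z \<and> sim (u, v) (z, w)} \<le> s"
    and hd: "\<forall>z \<in> Z. card {w \<in> Y. E z w} \<le> \<Delta>"
  shows "real (card {x \<in> hom_cycles V E (2*n). x 0 \<in> Y \<and> x (2*n-1) \<in> Z \<and>
                 (\<exists>i<n. sim (x i, x (Suc i)) (x (2*n-1), x 0))})
     \<le> sqrt (real n * real s * real \<Delta> * real (hom_cycle V E (2*n-2)) * real (hom_cycle V E (2*n)))"
proof -
  have fV: "finite V" using sg_fin[OF G] .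
  have fY: "finite Y" using finite_subset[OF Y fV] .
  let ?P0 = "{p \<in> walks V E n. p 0 \<in> Y}"
  define G' where "G' = (\<lambda>a b. real n * real s * (\<Sum>z\<in>{z \<in> Z. E a z}. real (card (wk V E (n-1) b z))^2))"
  have G'nn: "G' a b \<ge> 0" for a b unfolding G'_def by (intro mult_nonneg_nonneg sum_nonneg) auto
  let ?W = "\<lambda>ab. real (card (wk V E n (fst ab) (snd ab)))"
  have "real (card {x \<in> hom_cycles V E (2*n). x 0 \<in> Y \<and> x (2*n-1) \<in> Z \<and>
                 (\<exists>i<n. sim (x i, x (Suc i)) (x (2*n-1), x 0))})
      \<le> real (card (SIGMA p:?P0. Qs V E Z sim n p))"
    using C1[OF G n] by simp
  also have "\<dots> = (\<Sum>p\<in>?P0. real (card (Qs V E Z sim n p)))"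
    by (subst card_SigmaI) (use finite_walks[OF fV] in \<open>auto simp: Qs_def\<close>)
  also have "\<dots> \<le> (\<Sum>p\<in>?P0. sqrt (G' (p 0) (p n)))"
    by (rule sum_mono) (use C4[OF fV Z _ _ hs] in \<open>auto simp: G'_def\<close>)
  also have "\<dots> = (\<Sum>(a,b)\<in>Y\<times>V. real (card (wk V E n a b)) * sqrt (G' a b))"
    by (rule regroup[OF fV Y])
  also have "\<dots> = (\<Sum>ab\<in>Y\<times>V. ?W ab * sqrt (G' (fst ab) (snd ab)))"
    by (simp add: case_prod_beta)
  also have "\<dots> \<le> sqrt ((\<Sum>ab\<in>Y\<times>V. (?W ab)^2) * (\<Sum>ab\<in>Y\<times>V. G' (fst ab) (snd ab)))"
  proof (rule real_le_rsqrt)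
    have "(\<Sum>ab\<in>Y\<times>V. ?W ab * sqrt (G' (fst ab) (snd ab)))^2
        \<le> (\<Sum>ab\<in>Y\<times>V. (?W ab)^2) * (\<Sum>ab\<in>Y\<times>V. (sqrt (G' (fst ab) (snd ab)))^2)"
      by (rule Cauchy_Schwarz_ineq_sum)
    also have "(\<Sum>ab\<in>Y\<times>V. (sqrt (G' (fst ab) (snd ab)))^2) = (\<Sum>ab\<in>Y\<times>V. G' (fst ab) (snd ab))"
      using G'nn by simp
    finally show "(\<Sum>ab\<in>Y\<times>V. ?W ab * sqrt (G' (fst ab) (snd ab)))^2
        \<le> (\<Sum>ab\<in>Y\<times>V. (?W ab)^2) * (\<Sum>ab\<in>Y\<times>V. G' (fst ab) (snd ab))" .
  qed
  also have "\<dots> \<le> sqrt (real (hom_cycle V E (2*n)) * (real n * real s * real \<Delta> * real (hom_cycle V E (2*(n-1)))))"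
  proof (rule real_sqrt_le_mono, rule mult_mono)
    have "(\<Sum>ab\<in>Y\<times>V. (?W ab)^2) \<le> (\<Sum>ab\<in>V\<times>V. (?W ab)^2)"
      by (rule sum_mono2) (use Y fV in auto)
    also have "\<dots> \<le> real (hom_cycle V E (2*n))"
      using sq_sum_le[OF G, of n] n by (simp add: case_prod_beta)
    finally show "(\<Sum>ab\<in>Y\<times>V. (?W ab)^2) \<le> real (hom_cycle V E (2*n))" .
    have "(\<Sum>ab\<in>Y\<times>V. G' (fst ab) (snd ab)) = (\<Sum>(a,b)\<in>Y\<times>V. G' a b)"
      by (simp add: case_prod_beta)
    also have "\<dots> \<le> real n * real s * real \<Delta> * real (hom_cycle V E (2*(n-1)))"
      unfolding G'_def by (rule C5[OF G _ Y Z hd]) (use n in auto)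
    finally show "(\<Sum>ab\<in>Y\<times>V. G' (fst ab) (snd ab)) \<le> real n * real s * real \<Delta> * real (hom_cycle V E (2*(n-1)))" .
  qed (use G'nn in \<open>auto intro: sum_nonneg\<close>)
  also have "2*(n-1) = 2*n-2" by simp
  finally show ?thesis by (simp add: mult_ac)
qed


lemma mod_helper1: "c < m \<Longrightarrow> j < m \<Longrightarrow> ((j + m - Suc c) mod m + c + 1) mod m = j"
proof -
  assume c: "c < m" and j: "j < m"
  have "((j + m - Suc c) mod m + c + 1) mod m = ((j + m - Suc c) + (c + 1)) mod m"
    by (metis add.assoc mod_add_left_eq)
  also have "(j + m - Suc c) + (c + 1) = j + m" using c by simp
  finally show ?thesis using j by simp
qed

lemma mod_helper2: "m > 0 \<Longrightarrow> (Suc i mod m + c + 1) mod m = Suc ((i + c + 1) mod m) mod m"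
  by (metis add_Suc mod_Suc_eq mod_add_left_eq)

lemma rotate_le:
  assumes G: "simple_graph V E" and n: "n \<ge> 2" and c: "c < 2*n"
  shows "card {x \<in> hom_cycles V E (2*n). x (Suc c mod (2*n)) \<in> Y \<and> x c \<in> Z \<and>
            (\<exists>t<n. sim (x ((c+1+t) mod (2*n)), x (Suc ((c+1+t) mod (2*n)) mod (2*n))) (x c, x (Suc c mod (2*n))))}
     \<le> card {x \<in> hom_cycles V E (2*n). x 0 \<in> Y \<and> x (2*n-1) \<in> Z \<and>
                 (\<exists>i<n. sim (x i, x (Suc i)) (x (2*n-1), x 0))}"
  (is "card ?A \<le> card ?C")
proof -
  let ?m = "2*n"
  have m0: "?m > 0" using n by simp
  have fV: "finite V" using sg_fin[OF G] .
  have finC: "finite ?C"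
    by (rule finite_subset[OF _ finite_PiE[of "{0..<2*n}" "\<lambda>_. V"]]) (auto simp: fV hom_cycles_def)
  define rot where "rot x = (\<lambda>i. if i < ?m then x ((i + c + 1) mod ?m) else undefined)" for x :: "nat \<Rightarrow> 'a"
  have r0: "rot x 0 = x (Suc c mod ?m)" for x using m0 by (simp add: rot_def)
  have rl: "rot x (?m - 1) = x c" for x
  proof -
    have "(?m - 1 + c + 1) mod ?m = c" using c m0
      by (metis Suc_diff_1 add.commute add_Suc_right mod_add_self2 mod_less plus_1_eq_Suc)
    then show ?thesis using m0 by (simp add: rot_def)
  qed
  have "rot ` ?A \<subseteq> ?C"
  proof (rule image_subsetI)
    fix x assume "x \<in> ?A"
    then obtain t where x: "x \<in> hom_cycles V E ?m" and xy: "x (Suc c mod ?m) \<in> Y" and xz: "x c \<in> Z"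
      and t: "t < n" and st: "sim (x ((c+1+t) mod ?m), x (Suc ((c+1+t) mod ?m) mod ?m)) (x c, x (Suc c mod ?m))"
      by blast
    have xV: "j < ?m \<Longrightarrow> x j \<in> V" for j using x unfolding hom_cycles_def by auto
    have xE: "j < ?m \<Longrightarrow> E (x j) (x (Suc j mod ?m))" for j using x unfolding hom_cycles_def by auto
    have "rot x \<in> hom_cycles V E ?m"
      unfolding hom_cycles_def mem_Collect_eq
    proof (intro conjI allI impI)
      show "rot x \<in> {0..<?m} \<rightarrow>\<^sub>E V" using xV m0 by (auto simp: rot_def)
      fix i assume i: "i < ?m"
      have "rot x (Suc i mod ?m) = x (Suc ((i + c + 1) mod ?m) mod ?m)"
        using mod_helper2[OF m0, of i c] m0 by (simp add: rot_def)
      moreover have "rot x i = x ((i + c + 1) mod ?m)" using i by (simp add: rot_def)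
      ultimately show "E (rot x i) (rot x (Suc i mod ?m))" using xE[of "(i + c + 1) mod ?m"] m0 by simp
    qed
    moreover have "sim (rot x t, rot x (Suc t)) (rot x (?m - 1), rot x 0)"
    proof -
      have "rot x t = x ((c+1+t) mod ?m)" using t by (simp add: rot_def add.commute add.left_commute)
      moreover have "rot x (Suc t) = x (Suc ((c+1+t) mod ?m) mod ?m)"
        using mod_helper2[OF m0, of t c] t by (simp add: rot_def add.commute add.left_commute)
      ultimately show ?thesis using st r0 rl by simp
    qed
    ultimately show "rot x \<in> ?C" using r0 rl xy xz t by auto
  qed
  moreover have "inj_on rot ?A"
  proof (rule inj_onI)
    fix x y assume x: "x \<in> ?A" and y: "y \<in> ?A" and eq: "rot x = rot y"
    have ext: "z \<in> ?A \<Longrightarrow> j \<ge> ?m \<Longrightarrow> z j = undefined" for z j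
      unfolding hom_cycles_def by (auto simp: PiE_def extensional_def)
    show "x = y"
    proof
      fix j show "x j = y j"
      proof (cases "j < ?m")
        case True
        let ?i = "(j + ?m - Suc c) mod ?m"
        have "?i < ?m" using m0 by simp
        then have "rot x ?i = x j" "rot y ?i = y j" using mod_helper1[OF c True] by (simp_all add: rot_def)
        then show ?thesis using eq by simp
      next
        case False then show ?thesis using ext[OF x] ext[OF y] by simp
      qed
    qed
  qed
  ultimately show ?thesis using card_inj_on_le[OF _ _ finC] by blast
qed


lemma pick1:
  fixes i j k :: nat
  assumes "j < i" "i < 2*k"
  shows "(\<exists>t<k. (j+1+t) mod (2*k) = i) \<or> (\<exists>t<k. (i+1+t) mod (2*k) = j)"
proof (cases "i - j \<le> k")
  case True
  then have "(j+1+(i-j-1)) mod (2*k) = i" using assms by simp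
  then show ?thesis using True assms by (intro disjI1 exI[of _ "i-j-1"]) auto
next
  case False
  have "i+1+(2*k-(i-j)-1) = 2*k + j" using assms False by simp
  then have "(i+1+(2*k-(i-j)-1)) mod (2*k) = j" using assms by simp
  then show ?thesis using False assms by (intro disjI2 exI[of _ "2*k-(i-j)-1"]) auto
qed

lemma pick:
  fixes i j k :: nat
  assumes "i < 2*k" "j < 2*k" "i \<noteq> j"
  shows "(\<exists>t<k. (j+1+t) mod (2*k) = i) \<or> (\<exists>t<k. (i+1+t) mod (2*k) = j)"
proof (cases "j < i")
  case True then show ?thesis using pick1 assms by blast
next
  case False then have "i < j" using assms by simp
  then show ?thesis using pick1[of i j k] assms by blast
qed

lemma parity_next: "(c::nat) < 2*k \<Longrightarrow> even (Suc c mod (2*k)) \<longleftrightarrow> odd c"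
proof -
  assume c: "c < 2*k"
  show ?thesis
  proof (cases "Suc c < 2*k")
    case True then show ?thesis by simp
  next
    case False then have "Suc c = 2*k" using c by simp
    then have "Suc c mod (2*k) = 0" by simp
    moreover have "odd c" using \<open>Suc c = 2*k\<close> by (metis even_Suc dvd_triv_left)
    ultimately show ?thesis by simp
  qed
qed

theorem lemma2p5:
  fixes V :: "'a set" and E :: "'a \<Rightarrow> 'a \<Rightarrow> bool" and k :: nat
    and X1 X2 :: "'a set" and sim :: "'a \<times> 'a \<Rightarrow> 'a \<times> 'a \<Rightarrow> bool"
    and \<Delta>1 \<Delta>2 s1 s2 :: nat
  assumes k: "k \<ge> 2"
    and G: "simple_graph V E"
    and X1: "X1 \<subseteq> V" and X2: "X2 \<subseteq> V"
    and sym: "\<forall>p \<in> V \<times> V. \<forall>q \<in> V \<times> V. sim p q \<longrightarrow> sim q p"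
    and a: "\<forall>u \<in> V. \<forall>v \<in> V. \<forall>w \<in> X1.
              card {z \<in> X2. E w z} \<le> \<Delta>1 \<and> card {z \<in> X2. E w z \<and> sim (u, v) (z, w)} \<le> s1"
    and b: "\<forall>u \<in> V. \<forall>v \<in> V. \<forall>w \<in> X2.
              card {z \<in> X1. E w z} \<le> \<Delta>2 \<and> card {z \<in> X1. E w z \<and> sim (u, v) (z, w)} \<le> s2"
  shows "real (card {x \<in> hom_cycles V E (2 * k).
            ((\<forall>i < 2 * k. (even i \<longrightarrow> x i \<in> X1) \<and> (odd i \<longrightarrow> x i \<in> X2)) \<or>
             (\<forall>i < 2 * k. (even i \<longrightarrow> x i \<in> X2) \<and> (odd i \<longrightarrow> x i \<in> X1))) \<and>
            (\<exists>i < 2 * k. \<exists>j < 2 * k. i \<noteq> j \<and>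
               sim (x i, x (Suc i mod (2 * k))) (x j, x (Suc j mod (2 * k))))})
         \<le> 32 * real k * sqrt (real k * real (max (\<Delta>1 * s2) (\<Delta>2 * s1))
              * real (hom_cycle V E (2 * k - 2)) * real (hom_cycle V E (2 * k)))"
proof -
  let ?m = "2*k"
  let ?B = "{x \<in> hom_cycles V E (2 * k).
            ((\<forall>i < 2 * k. (even i \<longrightarrow> x i \<in> X1) \<and> (odd i \<longrightarrow> x i \<in> X2)) \<or>
             (\<forall>i < 2 * k. (even i \<longrightarrow> x i \<in> X2) \<and> (odd i \<longrightarrow> x i \<in> X1))) \<and>
            (\<exists>i < 2 * k. \<exists>j < 2 * k. i \<noteq> j \<and>
               sim (x i, x (Suc i mod (2 * k))) (x j, x (Suc j mod (2 * k))))}"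
  define A where "A Y Z c = {x \<in> hom_cycles V E (2*k). x (Suc c mod (2*k)) \<in> Y \<and> x c \<in> Z \<and>
            (\<exists>t<k. sim (x ((c+1+t) mod (2*k)), x (Suc ((c+1+t) mod (2*k)) mod (2*k))) (x c, x (Suc c mod (2*k))))}"
    for Y Z c
  define S where "S = sqrt (real k * real (max (\<Delta>1 * s2) (\<Delta>2 * s1))
              * real (hom_cycle V E (2 * k - 2)) * real (hom_cycle V E (2 * k)))"
  have S0: "S \<ge> 0" unfolding S_def by simp
  have fV: "finite V" using sg_fin[OF G] .
  have finHC: "finite (hom_cycles V E ?m)"
    by (rule finite_subset[OF _ finite_PiE[of "{0..<2*k}" "\<lambda>_. V"]]) (auto simp: fV hom_cycles_def)
  have cover: "?B \<subseteq> (\<Union>c<?m. A X1 X2 c \<union> A X2 X1 c)"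
  proof
    fix x assume xB: "x \<in> ?B"
    then have x: "x \<in> hom_cycles V E ?m" by blast
    have xV: "j < ?m \<Longrightarrow> x j \<in> V" for j using x unfolding hom_cycles_def by auto
    have cls: "(x (Suc c mod ?m) \<in> X1 \<and> x c \<in> X2) \<or> (x (Suc c mod ?m) \<in> X2 \<and> x c \<in> X1)"
      if c: "c < ?m" for c
    proof -
      have c1: "Suc c mod ?m < ?m" using k by simp
      have par: "even (Suc c mod ?m) \<longleftrightarrow> odd c" using parity_next[OF c] .
      from xB have "(\<forall>i < ?m. (even i \<longrightarrow> x i \<in> X1) \<and> (odd i \<longrightarrow> x i \<in> X2)) \<or>
             (\<forall>i < ?m. (even i \<longrightarrow> x i \<in> X2) \<and> (odd i \<longrightarrow> x i \<in> X1))" by blast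
      then show ?thesis
      proof
        assume h: "\<forall>i < ?m. (even i \<longrightarrow> x i \<in> X1) \<and> (odd i \<longrightarrow> x i \<in> X2)"
        show ?thesis using h[rule_format, OF c] h[rule_format, OF c1] par by (cases "even c") auto
      next
        assume h: "\<forall>i < ?m. (even i \<longrightarrow> x i \<in> X2) \<and> (odd i \<longrightarrow> x i \<in> X1)"
        show ?thesis using h[rule_format, OF c] h[rule_format, OF c1] par by (cases "even c") auto
      qed
    qed
    from xB obtain i j where i: "i < ?m" and j: "j < ?m" and ij: "i \<noteq> j"
      and sij: "sim (x i, x (Suc i mod ?m)) (x j, x (Suc j mod ?m))" by blast
    have inA: "x \<in> A X1 X2 c \<union> A X2 X1 c"
      if c: "c < ?m" and t: "t < k"
        and s: "sim (x ((c+1+t) mod ?m), x (Suc ((c+1+t) mod ?m) mod ?m)) (x c, x (Suc c mod ?m))" for c t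
      using cls[OF c] x s t unfolding A_def by blast
    from pick[OF i j ij] show "x \<in> (\<Union>c<?m. A X1 X2 c \<union> A X2 X1 c)"
    proof
      assume "\<exists>t<k. (j+1+t) mod ?m = i"
      then obtain t where t: "t < k" "(j+1+t) mod ?m = i" by blast
      show ?thesis using inA[OF j t(1)] sij t(2) j by auto
    next
      assume "\<exists>t<k. (i+1+t) mod ?m = j"
      then obtain t where t: "t < k" "(i+1+t) mod ?m = j" by blast
      have "Suc i mod ?m < ?m" "Suc j mod ?m < ?m" using k by auto
      then have "sim (x j, x (Suc j mod ?m)) (x i, x (Suc i mod ?m))"
        using sym sij xV i j by blast
      then show ?thesis using inA[OF i t(1)] t(2) i by auto
    qed
  qed
  have bound: "real (card (A Y Z c)) \<le> S"
    if Y: "Y \<subseteq> V" and Z: "Z \<subseteq> V" and c: "c < ?m"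
      and hs: "\<forall>u \<in> V. \<forall>v \<in> V. \<forall>w \<in> Y. card {z \<in> Z. E w z \<and> sim (u, v) (z, w)} \<le> s"
      and hd: "\<forall>z \<in> Z. card {w \<in> Y. E z w} \<le> \<Delta>"
      and sd: "s * \<Delta> \<le> max (\<Delta>1 * s2) (\<Delta>2 * s1)" for Y Z c s \<Delta>
  proof -
    have "real (card (A Y Z c)) \<le> real (card {x \<in> hom_cycles V E (2*k). x 0 \<in> Y \<and> x (2*k-1) \<in> Z \<and>
                 (\<exists>i<k. sim (x i, x (Suc i)) (x (2*k-1), x 0))})"
      using rotate_le[OF G k c, of Y Z sim] unfolding A_def by simp
    also have "\<dots> \<le> sqrt (real k * real s * real \<Delta> * real (hom_cycle V E (2*k-2)) * real (hom_cycle V E (2*k)))"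
      by (rule core[OF G k Y Z hs hd])
    also have "\<dots> \<le> S"
      unfolding S_def
    proof (rule real_sqrt_le_mono)
      have "real s * real \<Delta> \<le> real (max (\<Delta>1 * s2) (\<Delta>2 * s1))"
        using sd by (metis of_nat_le_iff of_nat_mult)
      then have "real k * (real s * real \<Delta>) \<le> real k * real (max (\<Delta>1 * s2) (\<Delta>2 * s1))"
        by (rule mult_left_mono) simp
      then show "real k * real s * real \<Delta> * real (hom_cycle V E (2*k-2)) * real (hom_cycle V E (2*k))
          \<le> real k * real (max (\<Delta>1 * s2) (\<Delta>2 * s1)) * real (hom_cycle V E (2*k-2)) * real (hom_cycle V E (2*k))"
        by (intro mult_right_mono) (auto simp: mult_ac)
    qed
    finally show ?thesis .
  qed
  have b1: "real (card (A X1 X2 c)) \<le> S" if "c < ?m" for c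
  proof (rule bound[OF X1 X2 that, of s1 \<Delta>2])
    show "\<forall>z\<in>X2. card {w \<in> X1. E z w} \<le> \<Delta>2" using b X2 by blast
    show "s1 * \<Delta>2 \<le> max (\<Delta>1 * s2) (\<Delta>2 * s1)" by (simp add: mult.commute)
  qed (use a in auto)
  have b2: "real (card (A X2 X1 c)) \<le> S" if "c < ?m" for c
  proof (rule bound[OF X2 X1 that, of s2 \<Delta>1])
    show "\<forall>z\<in>X1. card {w \<in> X2. E z w} \<le> \<Delta>1" using a X1 by blast
    show "s2 * \<Delta>1 \<le> max (\<Delta>1 * s2) (\<Delta>2 * s1)" by (simp add: mult.commute)
  qed (use b in auto)
  have "card ?B \<le> card (\<Union>c<?m. A X1 X2 c \<union> A X2 X1 c)"
    by (rule card_mono[OF _ cover]) (use finHC in \<open>auto simp: A_def\<close>)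
  also have "\<dots> \<le> (\<Sum>c<?m. card (A X1 X2 c \<union> A X2 X1 c))" by (rule card_UN_le) simp
  also have "\<dots> \<le> (\<Sum>c<?m. card (A X1 X2 c) + card (A X2 X1 c))" by (rule sum_mono, rule card_Un_le)
  finally have "real (card ?B) \<le> (\<Sum>c<?m. real (card (A X1 X2 c)) + real (card (A X2 X1 c)))"
    by (metis (no_types, lifting) of_nat_add of_nat_le_iff of_nat_sum sum.cong)
  also have "\<dots> \<le> (\<Sum>c<?m. 2 * S)" by (rule sum_mono) (use b1 b2 in fastforce)
  also have "\<dots> = 4 * real k * S" by simp
  also have "\<dots> \<le> 32 * real k * S" using S0 by (intro mult_right_mono) auto
  finally show ?thesis unfolding S_def .
qed

end
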